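(* Let $m\ge 38$ and let $G$ be a graph with maximum spectral radius among all $H(4,3)$-free graphs with $m$ edges and no isolated vertices (such a $G$ is connected). Let $\mathbf{x}$ be the Perron vector of $A(G)$, let $u^*$ be a vertex with $x_{u^*} = \max_{u\in V(G)} x_u$, and let $W = V(G)\setminus N[u^*]$. Then $d(w)\ge 2$ for every $w\in W$.
   Context: All graphs are simple and undirected; $A(G)$ is the adjacency matrix, $\rho(G)$ its largest eigenvalue, and the Perron vector is the unique positive unit eigenvector for $\rho(G)$ of a connected graph. $H(4,3)$ is the graph formed by a cycle of length $4$ and a triangle sharing exactly one common vertex. $N(v)$ is the neighbourhood of $v$, $N[v]=N(v)\cup\{v\}$, and $d(v)$ is the degree of $v$. *)

theory Defs
  imports Main "HOL-Analysis.Analysis"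
begin

text \<open>A finite simple graph is given by a vertex set V and an edge set E of
2-element subsets of V.  Vertices are natural numbers (every finite graph is
isomorphic to such a graph).\<close>

definition simple_graph :: "nat set \<Rightarrow> nat set set \<Rightarrow> bool" where
  "simple_graph V E \<longleftrightarrow> finite V \<and> (\<forall>e\<in>E. \<exists>u v. e = {u, v} \<and> u \<noteq> v \<and> u \<in> V \<and> v \<in> V)"

definition nbrs :: "nat set set \<Rightarrow> nat \<Rightarrow> nat set" where
  "nbrs E v = {u. {u, v} \<in> E}"

definition closed_nbrs :: "nat set set \<Rightarrow> nat \<Rightarrow> nat set" where
  "closed_nbrs E v = insert v (nbrs E v)"

definition degree :: "nat set set \<Rightarrow> nat \<Rightarrow> nat" where
  "degree E v = card (nbrs E v)"

definition no_isolated :: "nat set \<Rightarrow> nat set set \<Rightarrow> bool" where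
  "no_isolated V E \<longleftrightarrow> (\<forall>v\<in>V. \<exists>e\<in>E. v \<in> e)"

definition adj_matrix :: "nat set set \<Rightarrow> nat \<Rightarrow> nat \<Rightarrow> real" where
  "adj_matrix E u v = (if {u, v} \<in> E then 1 else 0)"

definition is_eigenvector :: "nat set \<Rightarrow> nat set set \<Rightarrow> real \<Rightarrow> (nat \<Rightarrow> real) \<Rightarrow> bool" where
  "is_eigenvector V E lam x \<longleftrightarrow>
     (\<forall>v. v \<notin> V \<longrightarrow> x v = 0) \<and> (\<exists>v\<in>V. x v \<noteq> 0) \<and>
     (\<forall>v\<in>V. (\<Sum>u\<in>V. adj_matrix E v u * x u) = lam * x v)"

definition is_eigenvalue :: "nat set \<Rightarrow> nat set set \<Rightarrow> real \<Rightarrow> bool" where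
  "is_eigenvalue V E lam \<longleftrightarrow> (\<exists>x. is_eigenvector V E lam x)"

definition spectral_radius :: "nat set \<Rightarrow> nat set set \<Rightarrow> real" where
  "spectral_radius V E = Max {lam. is_eigenvalue V E lam}"

definition perron_vector :: "nat set \<Rightarrow> nat set set \<Rightarrow> (nat \<Rightarrow> real) \<Rightarrow> bool" where
  "perron_vector V E x \<longleftrightarrow>
     is_eigenvector V E (spectral_radius V E) x \<and> (\<forall>v\<in>V. x v > 0) \<and>
     (\<Sum>v\<in>V. (x v)\<^sup>2) = 1"

text \<open>G contains H(4,3) (a 4-cycle c,a1,a2,a3 and a triangle c,b1,b2 sharing
only the vertex c) as a (not necessarily induced) subgraph.\<close>
definition contains_H43 :: "nat set \<Rightarrow> nat set set \<Rightarrow> bool" where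
  "contains_H43 V E \<longleftrightarrow> (\<exists>c a1 a2 a3 b1 b2.
     distinct [c, a1, a2, a3, b1, b2] \<and> set [c, a1, a2, a3, b1, b2] \<subseteq> V \<and>
     {c, a1} \<in> E \<and> {a1, a2} \<in> E \<and> {a2, a3} \<in> E \<and> {a3, c} \<in> E \<and>
     {c, b1} \<in> E \<and> {b1, b2} \<in> E \<and> {b2, c} \<in> E)"

definition H43_free :: "nat set \<Rightarrow> nat set set \<Rightarrow> bool" where
  "H43_free V E \<longleftrightarrow> \<not> contains_H43 V E"

definition admissible :: "nat \<Rightarrow> nat set \<Rightarrow> nat set set \<Rightarrow> bool" where
  "admissible m V E \<longleftrightarrow> simple_graph V E \<and> card E = m \<and> no_isolated V E \<and> H43_free V E"

end

theory Submission imports Defs "HOL-Library.Function_Algebras" begin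

definition BF :: "nat set \<Rightarrow> (nat \<Rightarrow> nat \<Rightarrow> real) \<Rightarrow> (nat \<Rightarrow> real) \<Rightarrow> (nat \<Rightarrow> real) \<Rightarrow> real" where
  "BF S M u v = (\<Sum>a\<in>S. \<Sum>b\<in>S. M a b * u a * v b)"

definition NN :: "nat set \<Rightarrow> (nat \<Rightarrow> real) \<Rightarrow> real" where
  "NN S u = (\<Sum>a\<in>S. u a * u a)"

lemma exists_max:
  assumes fin: "finite S" and ne: "S \<noteq> {}"
  shows "\<exists>y \<mu>. NN S y = 1 \<and> BF S M y y = \<mu> \<and> (\<forall>z. BF S M z z \<le> \<mu> * NN S z)"
proof -
  let ?T = "product_topology (\<lambda>_. euclideanreal) S"
  let ?P = "PiE S (\<lambda>_. {-1..1::real})"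
  let ?K = "{f \<in> topspace ?T. NN S f \<in> {1}} \<inter> ?P"
  have cQ: "continuous_map ?T euclideanreal (\<lambda>f. BF S M f f)"
    unfolding BF_def using fin
    by (intro continuous_map_sum continuous_map_real_mult continuous_map_const[THEN iffD2] disjI2
        continuous_map_product_projection) auto
  have cN: "continuous_map ?T euclideanreal (NN S)"
    unfolding NN_def using fin
    by (intro continuous_map_sum continuous_map_real_mult
        continuous_map_product_projection) auto
  have cP: "compactin ?T ?P"
    by (simp add: compactin_PiE)
  have clK: "closedin ?T ?K"
  proof (rule closedin_Int)
    show "closedin ?T {f \<in> topspace ?T. NN S f \<in> {1}}"
      by (rule closedin_continuous_map_preimage[OF cN]) simp
    show "closedin ?T ?P"
      by (simp add: closedin_product_topology)
  qed
  have cK: "compactin ?T ?K"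
    by (rule closed_compactin[OF cP _ clK]) auto
  have "compactin euclideanreal ((\<lambda>f. BF S M f f) ` ?K)"
    by (rule image_compactin[OF cK cQ])
  hence comp: "compact ((\<lambda>f. BF S M f f) ` ?K)" by simp
  obtain a0 where a0: "a0 \<in> S" using ne by auto
  define e where "e = (\<lambda>a\<in>S. if a = a0 then 1 else (0::real))"
  have "\<And>a. a \<in> S \<Longrightarrow> e a * e a = (if a = a0 then 1 else 0)" by (auto simp: e_def)
  hence "NN S e = (\<Sum>a\<in>S. if a = a0 then 1 else 0)" unfolding NN_def by (rule sum.cong[OF refl])
  hence "NN S e = 1" using fin a0 by simp
  hence "e \<in> ?K" using a0 by (auto simp: e_def PiE_def)
  hence "(\<lambda>f. BF S M f f) ` ?K \<noteq> {}" by blast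
  from compact_attains_sup[OF comp this] obtain y where
    y: "y \<in> ?K" and ymax: "\<And>f. f \<in> ?K \<Longrightarrow> BF S M f f \<le> BF S M y y" by auto
  show ?thesis
  proof (intro exI conjI allI)
    show "NN S y = 1" using y by auto
    show "BF S M y y = BF S M y y" ..
    fix z
    show "BF S M z z \<le> BF S M y y * NN S z"
    proof (cases "NN S z = 0")
      case True
      hence "\<forall>a\<in>S. z a * z a = 0" unfolding NN_def using fin
        by (subst sum_nonneg_eq_0_iff[symmetric]) auto
      hence "\<forall>a\<in>S. z a = 0" by simp
      hence "BF S M z z = 0" unfolding BF_def by simp
      thus ?thesis using True by simp
    next
      case False
      have nn: "NN S z \<ge> 0" unfolding NN_def by (intro sum_nonneg) auto
      hence pos: "NN S z > 0" using False by linarith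
      define s where "s = sqrt (NN S z)"
      have s: "s > 0" "s * s = NN S z" using pos by (auto simp: s_def)
      define f where "f = (\<lambda>a\<in>S. z a / s)"
      have Nf: "NN S f = 1" unfolding NN_def f_def using s pos
        by (simp add: sum_divide_distrib[symmetric] NN_def[symmetric])
      have "\<forall>a\<in>S. f a * f a \<le> 1"
      proof
        fix a assume "a \<in> S"
        hence "f a * f a \<le> NN S f" unfolding NN_def using fin
          by (intro member_le_sum) auto
        thus "f a * f a \<le> 1" using Nf by simp
      qed
      hence "\<forall>a\<in>S. f a \<in> {-1..1}"
        using abs_square_le_1 by (auto simp: power2_eq_square abs_le_iff)
      hence "f \<in> ?K" using Nf by (auto simp: f_def PiE_def)
      hence le: "BF S M f f \<le> BF S M y y" by (rule ymax)
      have "BF S M f f = BF S M z z / (s * s)" unfolding BF_def f_def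
        by (simp add: sum_divide_distrib[symmetric])
      with le s have "BF S M z z / NN S z \<le> BF S M y y" by simp
      thus ?thesis using pos by (simp add: divide_le_eq)
    qed
  qed
qed

lemma BF_sym:
  assumes "\<And>a b. M a b = M b a"
  shows "BF S M u v = BF S M v u"
  unfolding BF_def
  by (subst sum.swap) (simp add: assms mult.commute mult.left_commute)

lemma BF_expand:
  "BF S M (\<lambda>a. y a + t * r a) (\<lambda>a. y a + t * r a) =
     BF S M y y + t * BF S M r y + t * BF S M y r + t^2 * BF S M r r"
  unfolding BF_def power2_eq_square
  by (simp add: algebra_simps sum.distrib sum_distrib_left)

lemma NN_expand:
  "NN S (\<lambda>a. y a + t * r a) = NN S y + 2 * t * (\<Sum>a\<in>S. r a * y a) + t^2 * NN S r"
  unfolding NN_def power2_eq_square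
  by (simp add: algebra_simps sum.distrib sum_distrib_left)

lemma quad_arg:
  fixes R c :: real
  assumes "R \<ge> 0" "c \<le> 0" "\<And>t. 2 * t * R + t^2 * c \<le> 0"
  shows "R = 0"
proof (rule ccontr)
  assume "R \<noteq> 0"
  hence R: "R > 0" using assms by simp
  define t where "t = R / (1 - c)"
  have d: "1 - c \<ge> 1" using assms by simp
  have t: "t > 0" using R d by (simp add: t_def)
  have "t * c \<ge> - R"
  proof -
    have "t * c = R * (c / (1 - c))" by (simp add: t_def)
    moreover have "c / (1 - c) \<ge> -1" using d by (simp add: field_simps)
    ultimately show ?thesis using R
      by (metis mult.commute mult_left_mono mult_minus1_right less_imp_le)
  qed
  hence "2 * R + t * c > 0" using R by linarith
  hence "t * (2 * R + t * c) > 0" using t by simp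
  moreover have "t * (2 * R + t * c) = 2 * t * R + t^2 * c" by (simp add: algebra_simps power2_eq_square)
  ultimately show False using assms(3)[of t] by linarith
qed

lemma lagrange:
  assumes fin: "finite S" and sym: "\<And>a b. M a b = M b a"
    and le: "\<And>z. BF S M z z \<le> \<mu> * NN S z"
    and eq: "BF S M y y = \<mu> * NN S y"
  shows "\<forall>a\<in>S. (\<Sum>b\<in>S. M a b * y b) = \<mu> * y a"
proof -
  define r where "r a = (\<Sum>b\<in>S. M a b * y b) - \<mu> * y a" for a
  define R where "R = (\<Sum>a\<in>S. r a * r a)"
  define c where "c = BF S M r r - \<mu> * NN S r"
  have Rnn: "R \<ge> 0" unfolding R_def by (intro sum_nonneg) auto
  have c: "c \<le> 0" using le[of r] by (simp add: c_def)
  have BFry: "BF S M r y = (\<Sum>a\<in>S. r a * (\<Sum>b\<in>S. M a b * y b))"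
    unfolding BF_def by (simp add: sum_distrib_left ac_simps)
  have key: "2 * t * R + t^2 * c \<le> 0" for t
  proof -
    have "BF S M (\<lambda>a. y a + t * r a) (\<lambda>a. y a + t * r a) \<le> \<mu> * NN S (\<lambda>a. y a + t * r a)"
      by (rule le)
    hence "BF S M y y + 2 * t * BF S M r y + t^2 * BF S M r r
        \<le> \<mu> * (NN S y + 2 * t * (\<Sum>a\<in>S. r a * y a) + t^2 * NN S r)"
      unfolding BF_expand NN_expand using BF_sym[of M S y r, OF sym] by simp
    hence "2 * t * (BF S M r y - \<mu> * (\<Sum>a\<in>S. r a * y a)) + t^2 * c \<le> 0"
      using eq by (simp add: c_def algebra_simps)
    moreover have "BF S M r y - \<mu> * (\<Sum>a\<in>S. r a * y a) = R"
      unfolding BFry R_def r_def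
      by (simp add: sum_distrib_left sum_subtractf[symmetric] algebra_simps)
    ultimately show ?thesis by simp
  qed
  have "R = 0" by (rule quad_arg[OF Rnn c key])
  hence "\<forall>a\<in>S. r a * r a = 0" unfolding R_def using fin
    by (subst sum_nonneg_eq_0_iff[symmetric]) auto
  thus ?thesis by (simp add: r_def)
qed

lemma adj_sym: "adj_matrix E a b = adj_matrix E b a"
  unfolding adj_matrix_def by (simp add: insert_commute)

lemma eig_exists:
  assumes fin: "finite V" and ne: "V \<noteq> {}"
  shows "\<exists>\<mu>. is_eigenvalue V E \<mu> \<and> (\<forall>z. BF V (adj_matrix E) z z \<le> \<mu> * NN V z)"
proof -
  obtain y \<mu> where y: "NN V y = 1" "BF V (adj_matrix E) y y = \<mu>"
    and le: "\<forall>z. BF V (adj_matrix E) z z \<le> \<mu> * NN V z"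
    using exists_max[OF fin ne] by blast
  have eq: "\<forall>a\<in>V. (\<Sum>b\<in>V. adj_matrix E a b * y b) = \<mu> * y a"
    by (rule lagrange[OF fin adj_sym]) (use le y in auto)
  define y' where "y' a = (if a \<in> V then y a else 0)" for a
  have "\<exists>v\<in>V. y v \<noteq> 0"
  proof (rule ccontr)
    assume "\<not> ?thesis"
    hence "NN V y = 0" unfolding NN_def by simp
    thus False using y by simp
  qed
  hence "is_eigenvector V E \<mu> y'"
    unfolding is_eigenvector_def y'_def using eq by (auto cong: sum.cong)
  thus ?thesis using le unfolding is_eigenvalue_def by blast
qed

interpretation fvs: vector_space "(\<lambda>(r::real) (f::nat \<Rightarrow> real). (\<lambda>i. r * f i))"
  by unfold_locales (auto simp: fun_eq_iff algebra_simps)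

lemma sum_fun_apply: "finite T \<Longrightarrow> (sum f T :: nat \<Rightarrow> real) a = (\<Sum>v\<in>T. f v a)"
  by (induction T rule: finite_induct) auto

lemma BF_eig:
  assumes "\<forall>a\<in>V. (\<Sum>b\<in>V. M a b * v b) = lam * v a"
  shows "BF V M u v = lam * (\<Sum>a\<in>V. u a * v a)"
proof -
  have "BF V M u v = (\<Sum>a\<in>V. u a * (\<Sum>b\<in>V. M a b * v b))"
    unfolding BF_def by (simp add: sum_distrib_left ac_simps)
  also have "\<dots> = (\<Sum>a\<in>V. u a * (lam * v a))" using assms by simp
  finally show ?thesis by (simp add: sum_distrib_left ac_simps)
qed

lemma eig_finite:
  assumes fin: "finite V"
  shows "finite {lam. is_eigenvalue V E lam}"
proof -
  let ?L = "{lam. is_eigenvalue V E lam}"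
  let ?M = "adj_matrix E"
  define ev where "ev lam = (SOME x. is_eigenvector V E lam x)" for lam
  have ev: "is_eigenvector V E lam (ev lam)" if "lam \<in> ?L" for lam
    using that unfolding ev_def is_eigenvalue_def by (metis (mono_tags) mem_Collect_eq someI_ex)
  have orth: "(\<Sum>a\<in>V. ev l1 a * ev l2 a) = 0" if "l1 \<in> ?L" "l2 \<in> ?L" "l1 \<noteq> l2" for l1 l2
  proof -
    have e1: "\<forall>a\<in>V. (\<Sum>b\<in>V. ?M a b * ev l1 b) = l1 * ev l1 a"
      using ev[OF that(1)] unfolding is_eigenvector_def by auto
    have e2: "\<forall>a\<in>V. (\<Sum>b\<in>V. ?M a b * ev l2 b) = l2 * ev l2 a"
      using ev[OF that(2)] unfolding is_eigenvector_def by auto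
    have "BF V ?M (ev l2) (ev l1) = l1 * (\<Sum>a\<in>V. ev l2 a * ev l1 a)" by (rule BF_eig[OF e1])
    moreover have "BF V ?M (ev l1) (ev l2) = l2 * (\<Sum>a\<in>V. ev l1 a * ev l2 a)" by (rule BF_eig[OF e2])
    moreover have "BF V ?M (ev l2) (ev l1) = BF V ?M (ev l1) (ev l2)" by (rule BF_sym[OF adj_sym])
    moreover have "(\<Sum>a\<in>V. ev l2 a * ev l1 a) = (\<Sum>a\<in>V. ev l1 a * ev l2 a)"
      by (simp add: mult.commute)
    ultimately have "(l1 - l2) * (\<Sum>a\<in>V. ev l1 a * ev l2 a) = 0"
      by (auto simp: algebra_simps)
    thus ?thesis using that(3) by simp
  qed
  have selfpos: "(\<Sum>a\<in>V. ev l a * ev l a) > 0" if lL: "l \<in> ?L" for l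
  proof -
    obtain a where a: "a \<in> V" "ev l a \<noteq> 0" using ev[OF lL] unfolding is_eigenvector_def by auto
    have "ev l a * ev l a \<le> (\<Sum>a\<in>V. ev l a * ev l a)"
      using fin a by (intro member_le_sum) auto
    moreover have "ev l a * ev l a > 0" using a by (auto simp add: zero_less_mult_iff linorder_neq_iff)
    ultimately show ?thesis by linarith
  qed
  have inj: "inj_on ev ?L"
  proof (rule inj_onI)
    fix l1 l2 assume l: "l1 \<in> ?L" "l2 \<in> ?L" "ev l1 = ev l2"
    show "l1 = l2"
    proof (rule ccontr)
      assume "l1 \<noteq> l2"
      from orth[OF l(1,2) this] selfpos[OF l(1)] l(3) show False by simp
    qed
  qed
  define \<delta> where "\<delta> a = (\<lambda>i. if i = a then 1 else (0::real))" for a :: nat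
  have span: "ev ` ?L \<subseteq> fvs.span (\<delta> ` V)"
  proof
    fix v assume "v \<in> ev ` ?L"
    then obtain l where l: "l \<in> ?L" "v = ev l" by auto
    have z: "\<forall>i. i \<notin> V \<longrightarrow> v i = 0" using ev[OF l(1)] l(2) unfolding is_eigenvector_def by auto
    have "v = (\<Sum>a\<in>V. (\<lambda>i. v a * \<delta> a i))"
    proof
      fix i
      have "(\<Sum>a\<in>V. (\<lambda>i. v a * \<delta> a i)) i = (\<Sum>a\<in>V. v a * \<delta> a i)"
        by (rule sum_fun_apply[OF fin])
      also have "\<dots> = (\<Sum>a\<in>V. if i = a then v a else 0)"
        by (rule sum.cong) (auto simp: \<delta>_def)
      also have "\<dots> = v i" using fin z by (auto simp: sum.delta)
      finally show "v i = (\<Sum>a\<in>V. (\<lambda>i. v a * \<delta> a i)) i" by simp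
    qed
    also have "\<dots> \<in> fvs.span (\<delta> ` V)"
      by (intro fvs.span_sum fvs.span_scale fvs.span_base) auto
    finally show "v \<in> fvs.span (\<delta> ` V)" .
  qed
  have indep: "fvs.independent (ev ` ?L)"
    unfolding fvs.independent_explicit_finite_subsets
  proof (intro allI impI ballI)
    fix T u v0
    assume T: "T \<subseteq> ev ` ?L" "finite T" and s: "(\<Sum>v\<in>T. (\<lambda>i. u v * v i)) = 0" and v0: "v0 \<in> T"
    have pt: "(\<Sum>v\<in>T. u v * v a) = 0" for a
      using arg_cong[OF s, of "\<lambda>f. f a"] sum_fun_apply[OF T(2)] by simp
    obtain l0 where l0: "l0 \<in> ?L" "v0 = ev l0" using T v0 by auto
    have "0 = (\<Sum>a\<in>V. v0 a * (\<Sum>v\<in>T. u v * v a))" using pt by simp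
    also have "\<dots> = (\<Sum>v\<in>T. u v * (\<Sum>a\<in>V. v0 a * v a))"
      by (simp add: sum_distrib_left ac_simps sum.swap[of _ V])
    also have "\<dots> = u v0 * (\<Sum>a\<in>V. v0 a * v0 a) + (\<Sum>v\<in>T - {v0}. u v * (\<Sum>a\<in>V. v0 a * v a))"
      by (rule sum.remove[OF T(2) v0])
    also have "(\<Sum>v\<in>T - {v0}. u v * (\<Sum>a\<in>V. v0 a * v a)) = 0"
    proof (rule sum.neutral, rule ballI)
      fix v assume "v \<in> T - {v0}"
      then obtain l where l: "l \<in> ?L" "v = ev l" "v \<noteq> v0" using T by auto
      hence "l \<noteq> l0" using l0 by auto
      thus "u v * (\<Sum>a\<in>V. v0 a * v a) = 0" using orth[OF l0(1) l(1)] l l0 by simp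
    qed
    finally show "u v0 = 0" using selfpos[OF l0(1)] l0(2) by simp
  qed
  have "finite (ev ` ?L)"
    using fvs.independent_span_bound[OF _ indep span] fin by auto
  thus ?thesis using finite_imageD[OF _ inj] by blast
qed

lemma D_lemma:
  fixes p q :: nat and x :: "nat \<Rightarrow> real"
  assumes fin: "finite V" and pq: "p \<in> V" "q \<in> V" "p \<noteq> q"
  shows "(\<Sum>a\<in>V. \<Sum>b\<in>V. (if {a, b} = {p, q} then 1 else 0) * x a * x b) = 2 * x p * x q"
proof -
  have "(if {a, b} = {p, q} then 1 else 0) * x a * x b =
        (if a = p then (if b = q then x p * x q else 0) else 0) +
        (if a = q then (if b = p then x q * x p else 0) else 0)" for a b :: nat
  proof (cases "{a, b} = {p, q}")
    case True
    hence "(a = p \<and> b = q) \<or> (a = q \<and> b = p)" by (simp add: doubleton_eq_iff)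
    thus ?thesis using True pq by (auto simp: mult.commute)
  next
    case False
    hence "\<not> (a = p \<and> b = q)" "\<not> (a = q \<and> b = p)" by (auto simp: insert_commute)
    thus ?thesis using False by auto
  qed
  hence "(\<Sum>a\<in>V. \<Sum>b\<in>V. (if {a, b} = {p, q} then 1 else 0) * x a * x b) =
     (\<Sum>a\<in>V. \<Sum>b\<in>V. (if a = p then (if b = q then x p * x q else 0) else 0) +
        (if a = q then (if b = p then x q * x p else 0) else 0))" by simp
  also have "\<dots> = (\<Sum>a\<in>V. (if a = p then x p * x q else 0) + (if a = q then x q * x p else 0))"
    using fin pq by (intro sum.cong refl) (simp add: sum.distrib)
  also have "\<dots> = 2 * x p * x q" using fin pq
    by (simp add: sum.distrib)
  finally show ?thesis .
qed

lemma ext_sum: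
  assumes "finite V" "V' \<subseteq> V" "\<And>a. a \<in> V - V' \<Longrightarrow> g a = 0"
  shows "(\<Sum>a\<in>V'. g a) = (\<Sum>a\<in>V. g a)"
  by (rule sum.mono_neutral_left) (use assms in auto)

theorem mainTheorem4:
  fixes m :: nat and V :: "nat set" and E :: "nat set set"
    and x :: "nat \<Rightarrow> real" and ustar :: nat
  assumes "m \<ge> 38"
    and "admissible m V E"
    and "\<forall>V' E'. admissible m V' E' \<longrightarrow> spectral_radius V' E' \<le> spectral_radius V E"
    and "perron_vector V E x"
    and "ustar \<in> V"
    and "\<forall>u\<in>V. x u \<le> x ustar"
  shows "\<forall>w \<in> V - closed_nbrs E ustar. degree E w \<ge> 2"
proof (rule ccontr)
  assume "\<not> ?thesis"
  then obtain w where wV: "w \<in> V" and wN: "w \<notin> closed_nbrs E ustar" and dw: "degree E w < 2"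
    by auto
  note adm = assms(2)[unfolded admissible_def]
  have sg: "simple_graph V E" and cE: "card E = m" and noi: "no_isolated V E" and hf: "H43_free V E"
    using adm by auto
  have finV: "finite V" using sg by (simp add: simple_graph_def)
  have finE: "finite E" using cE assms(1) by (intro card_ge_0_finite) simp
  have edges: "\<And>e. e \<in> E \<Longrightarrow> \<exists>p q. e = {p, q} \<and> p \<noteq> q \<and> p \<in> V \<and> q \<in> V"
    using sg by (simp add: simple_graph_def)
  have wu: "w \<noteq> ustar" using wN by (simp add: closed_nbrs_def)
  have wuE: "{w, ustar} \<notin> E" using wN by (simp add: closed_nbrs_def nbrs_def)
  obtain v where wvE: "{w, v} \<in> E" and vw: "v \<noteq> w" and vV: "v \<in> V"
  proof -
    obtain e where "e \<in> E" "w \<in> e" using noi wV by (auto simp: no_isolated_def)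
    then obtain p q where "e = {p, q}" "p \<noteq> q" "p \<in> V" "q \<in> V" using edges by blast
    thus ?thesis using that \<open>e \<in> E\<close> \<open>w \<in> e\<close> by (auto simp: insert_commute)
  qed
  have wonly: "\<And>e. e \<in> E \<Longrightarrow> w \<in> e \<Longrightarrow> e = {w, v}"
  proof -
    fix e assume e: "e \<in> E" "w \<in> e"
    then obtain q where q: "e = {w, q}" "q \<noteq> w" using edges by (metis insert_commute insertE singletonD)
    have sub: "nbrs E w \<subseteq> V" unfolding nbrs_def using edges
      by auto (metis doubleton_eq_iff)
    have "v \<in> nbrs E w" "q \<in> nbrs E w" using wvE e q by (auto simp: nbrs_def insert_commute)
    moreover have "card (nbrs E w) \<le> 1" using dw by (simp add: degree_def)
    moreover have "finite (nbrs E w)" using sub finV finite_subset by blast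
    ultimately have "q = v" by (metis card_le_Suc0_iff_eq One_nat_def)
    thus "e = {w, v}" using q by simp
  qed
  have vu: "v \<noteq> ustar" using wvE wuE by auto
  define E' where "E' = insert {w, ustar} (E - {{w, v}})"
  define V' where "V' = {a \<in> V. \<exists>e\<in>E'. a \<in> e}"
  have E'w: "\<And>e. e \<in> E' \<Longrightarrow> w \<in> e \<Longrightarrow> e = {w, ustar}"
    using wonly unfolding E'_def by auto
  have E'E: "\<And>e. e \<in> E' \<Longrightarrow> w \<notin> e \<Longrightarrow> e \<in> E"
    unfolding E'_def by auto
  have sg': "simple_graph V' E'"
    unfolding simple_graph_def
  proof (intro conjI ballI)
    show "finite V'" using finV by (simp add: V'_def)
    fix e assume e: "e \<in> E'"
    show "\<exists>p q. e = {p, q} \<and> p \<noteq> q \<and> p \<in> V' \<and> q \<in> V'"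
    proof (cases "e = {w, ustar}")
      case True
      show ?thesis
        by (rule exI[of _ w], rule exI[of _ ustar]) (use True e wu wV assms(5) in \<open>auto simp: V'_def\<close>)
    next
      case False
      hence "e \<in> E" using e by (auto simp: E'_def)
      then obtain p q where pq: "e = {p, q}" "p \<noteq> q" "p \<in> V" "q \<in> V" using edges by blast
      show ?thesis
        by (rule exI[of _ p], rule exI[of _ q]) (use pq e in \<open>auto simp: V'_def\<close>)
    qed
  qed
  have cE': "card E' = m"
  proof -
    have "card (E - {{w, v}}) = m - 1" using cE finE wvE by simp
    moreover have "{w, ustar} \<notin> E - {{w, v}}" using wuE by simp
    ultimately show ?thesis using finE assms(1) unfolding E'_def by simp
  qed
  have noi': "no_isolated V' E'" by (auto simp: no_isolated_def V'_def)
  have hf': "H43_free V' E'"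
    unfolding H43_free_def contains_H43_def
  proof
    assume "\<exists>c a1 a2 a3 b1 b2.
     distinct [c, a1, a2, a3, b1, b2] \<and> set [c, a1, a2, a3, b1, b2] \<subseteq> V' \<and>
     {c, a1} \<in> E' \<and> {a1, a2} \<in> E' \<and> {a2, a3} \<in> E' \<and> {a3, c} \<in> E' \<and>
     {c, b1} \<in> E' \<and> {b1, b2} \<in> E' \<and> {b2, c} \<in> E'"
    then obtain c a1 a2 a3 b1 b2 where H:
     "distinct [c, a1, a2, a3, b1, b2]" "set [c, a1, a2, a3, b1, b2] \<subseteq> V'"
     "{c, a1} \<in> E'" "{a1, a2} \<in> E'" "{a2, a3} \<in> E'" "{a3, c} \<in> E'"
     "{c, b1} \<in> E'" "{b1, b2} \<in> E'" "{b2, c} \<in> E'" by blast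
    have two: "\<And>p q r. {p, q} \<in> E' \<Longrightarrow> {p, r} \<in> E' \<Longrightarrow> q \<noteq> r \<Longrightarrow> p \<noteq> w"
    proof
      fix p q r assume "{p, q} \<in> E'" "{p, r} \<in> E'" "q \<noteq> r" "p = w"
      hence "{p, q} = {w, ustar}" "{p, r} = {w, ustar}" using E'w by auto
      thus False using \<open>q \<noteq> r\<close> \<open>p = w\<close> wu by (auto simp: doubleton_eq_iff)
    qed
    have nw: "c \<noteq> w" "a1 \<noteq> w" "a2 \<noteq> w" "a3 \<noteq> w" "b1 \<noteq> w" "b2 \<noteq> w"
    proof -
      show "c \<noteq> w" by (rule two[OF H(3) H(7)]) (use H(1) in auto)
      show "a1 \<noteq> w" by (rule two[of a1 c a2]) (use H(1,3,4) in \<open>auto simp: insert_commute\<close>)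
      show "a2 \<noteq> w" by (rule two[of a2 a1 a3]) (use H(1,4,5) in \<open>auto simp: insert_commute\<close>)
      show "a3 \<noteq> w" by (rule two[of a3 a2 c]) (use H(1,5,6) in \<open>auto simp: insert_commute\<close>)
      show "b1 \<noteq> w" by (rule two[of b1 c b2]) (use H(1,7,8) in \<open>auto simp: insert_commute\<close>)
      show "b2 \<noteq> w" by (rule two[of b2 b1 c]) (use H(1,8,9) in \<open>auto simp: insert_commute\<close>)
    qed
    have "contains_H43 V E"
      unfolding contains_H43_def
      apply (rule exI[of _ c], rule exI[of _ a1], rule exI[of _ a2], rule exI[of _ a3],
             rule exI[of _ b1], rule exI[of _ b2])
      using H nw E'E unfolding V'_def by auto
    thus False using hf by (simp add: H43_free_def)
  qed
  have adm': "admissible m V' E'" using sg' cE' noi' hf' by (simp add: admissible_def)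
  define \<rho> where "\<rho> = spectral_radius V E"
  have pv: "is_eigenvector V E \<rho> x" "\<forall>v\<in>V. x v > 0" "(\<Sum>v\<in>V. (x v)\<^sup>2) = 1"
    using assms(4) by (auto simp: perron_vector_def \<rho>_def)
  have xeq: "\<forall>a\<in>V. (\<Sum>b\<in>V. adj_matrix E a b * x b) = \<rho> * x a"
    using pv(1) by (simp add: is_eigenvector_def)
  have Nx: "NN V x = 1" using pv(3) by (simp add: NN_def power2_eq_square)
  have BFx: "BF V (adj_matrix E) x x = \<rho>"
    using BF_eig[OF xeq, of x] Nx by (simp add: NN_def)
  have rho0: "\<rho> \<ge> 0"
  proof -
    have "BF V (adj_matrix E) x x \<ge> 0" unfolding BF_def adj_matrix_def
      using pv(2) by (intro sum_nonneg) (auto intro!: mult_nonneg_nonneg less_imp_le)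
    thus ?thesis using BFx by simp
  qed
  have V'V: "V' \<subseteq> V" by (auto simp: V'_def)
  have wV': "w \<in> V'" "ustar \<in> V'" using wV assms(5) by (auto simp: V'_def E'_def)
  have finV': "finite V'" using V'V finV finite_subset by blast
  obtain \<mu> where mu: "is_eigenvalue V' E' \<mu>" "\<forall>z. BF V' (adj_matrix E') z z \<le> \<mu> * NN V' z"
    using eig_exists[OF finV', of E'] wV' by blast
  have "\<mu> \<le> spectral_radius V' E'"
    unfolding spectral_radius_def using mu(1) eig_finite[OF finV'] by (intro Max_ge) auto
  moreover have "spectral_radius V' E' \<le> \<rho>" using assms(3) adm' by (simp add: \<rho>_def)
  ultimately have mur: "\<mu> \<le> \<rho>" by linarith
  have adj'0: "adj_matrix E' a b = 0" if "a \<in> V - V'" for a b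
    using that unfolding adj_matrix_def V'_def by auto
  have adj'0b: "adj_matrix E' a b = 0" if "b \<in> V - V'" for a b
    using adj'0[OF that] adj_sym by metis
  have adj': "adj_matrix E' a b = adj_matrix E a b + (if {a, b} = {w, ustar} then 1 else 0)
      - (if {a, b} = {w, v} then 1 else 0)" for a b
    using wuE wvE unfolding adj_matrix_def E'_def by auto
  define z where "z a = (if a \<in> V' then x a else 0)" for a
  have BFz: "BF V' (adj_matrix E') z z = BF V (adj_matrix E') x x"
  proof -
    have "BF V' (adj_matrix E') z z = (\<Sum>a\<in>V'. \<Sum>b\<in>V'. adj_matrix E' a b * x a * x b)"
      unfolding BF_def z_def by (intro sum.cong refl) auto
    also have "\<dots> = (\<Sum>a\<in>V'. \<Sum>b\<in>V. adj_matrix E' a b * x a * x b)"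
      by (intro sum.cong refl ext_sum[OF finV V'V]) (simp add: adj'0b)
    also have "\<dots> = (\<Sum>a\<in>V. \<Sum>b\<in>V. adj_matrix E' a b * x a * x b)"
      by (intro ext_sum[OF finV V'V]) (simp add: adj'0)
    finally show ?thesis by (simp add: BF_def)
  qed
  have BF': "BF V (adj_matrix E') x x = \<rho> + 2 * x w * x ustar - 2 * x w * x v"
  proof -
    have "BF V (adj_matrix E') x x = BF V (adj_matrix E) x x
       + (\<Sum>a\<in>V. \<Sum>b\<in>V. (if {a, b} = {w, ustar} then 1 else 0) * x a * x b)
       - (\<Sum>a\<in>V. \<Sum>b\<in>V. (if {a, b} = {w, v} then 1 else 0) * x a * x b)"
      unfolding BF_def adj' by (simp add: algebra_simps sum.distrib sum_subtractf)
    thus ?thesis using D_lemma[OF finV wV assms(5) wu, of x] D_lemma[OF finV wV vV vw[symmetric], of x] BFx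
      by simp
  qed
  have Nz: "NN V' z \<le> 1" "NN V' z > 0"
  proof -
    have "NN V' z = NN V' x" unfolding NN_def z_def by (intro sum.cong refl) auto
    also have "\<dots> \<le> NN V x" unfolding NN_def using finV V'V by (intro sum_mono2) auto
    finally show "NN V' z \<le> 1" using Nx by simp
    have "z w * z w \<le> NN V' z" unfolding NN_def using finV' wV' by (intro member_le_sum) auto
    moreover have "z w * z w > 0" using pv(2) wV wV' by (simp add: z_def)
    ultimately show "NN V' z > 0" by linarith
  qed
  have "x w * x v \<le> x w * x ustar"
    using pv(2) assms(6) wV vV by (intro mult_left_mono) auto
  hence geq: "BF V' (adj_matrix E') z z \<ge> \<rho>"
    using BFz BF' by linarith
  have s1: "BF V' (adj_matrix E') z z \<le> \<mu> * NN V' z" using mu(2) by blast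
  have s2: "\<mu> * NN V' z \<le> \<rho> * NN V' z" using mur Nz by (simp add: mult_right_mono)
  have s3: "\<rho> * NN V' z \<le> \<rho>" using rho0 Nz by (simp add: mult_left_le)
  have eqs: "\<mu> * NN V' z = \<rho> * NN V' z" "BF V' (adj_matrix E') z z = \<mu> * NN V' z"
    using s1 s2 s3 geq by linarith+
  have "\<mu> = \<rho>" using eqs(1) Nz(2) by simp
  have lag: "\<forall>a\<in>V'. (\<Sum>b\<in>V'. adj_matrix E' a b * z b) = \<mu> * z a"
    by (rule lagrange[OF finV' adj_sym]) (use mu(2) eqs(2) in auto)
  have "(\<Sum>b\<in>V'. adj_matrix E' ustar b * z b) = (\<Sum>b\<in>V. adj_matrix E' ustar b * x b)"
  proof -
    have "(\<Sum>b\<in>V'. adj_matrix E' ustar b * z b) = (\<Sum>b\<in>V'. adj_matrix E' ustar b * x b)"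
      unfolding z_def by (intro sum.cong refl) auto
    also have "\<dots> = (\<Sum>b\<in>V. adj_matrix E' ustar b * x b)"
      by (intro ext_sum[OF finV V'V]) (simp add: adj'0b)
    finally show ?thesis .
  qed
  also have "\<dots> = (\<Sum>b\<in>V. adj_matrix E ustar b * x b + (if b = w then x b else 0))"
  proof (intro sum.cong refl)
    fix b
    have "adj_matrix E' ustar b = adj_matrix E ustar b + (if b = w then 1 else 0)"
      unfolding adj' using wu vu by (auto simp: doubleton_eq_iff)
    thus "adj_matrix E' ustar b * x b = adj_matrix E ustar b * x b + (if b = w then x b else 0)"
      by (simp add: algebra_simps)
  qed
  also have "\<dots> = \<rho> * x ustar + x w"
    using xeq assms(5) wV finV by (simp add: sum.distrib)
  finally have "\<rho> * x ustar + x w = \<mu> * x ustar" using lag wV' by (simp add: z_def)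
  hence "x w = 0" using \<open>\<mu> = \<rho>\<close> by simp
  moreover have "x w > 0" using pv(2) wV by blast
  ultimately show False by simp
qed

end
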